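(* Let $M$ be a finite abelian group of exponent greater than $2$ and let $g$ be a proper half-automorphism of $L_M$. Let $g'\in\mathrm{Aut}(K)$ and $u,v\in M$ (with $u^2=v^2=1$) be such that $g(A,1)=(g'(A),\alpha_{(u,v)}(A))$ for all $A\in K$, and let $g''\in\mathrm{Aut}(M)$ be defined by $g(1,x)=(1,g''(x))$ for $x\in M$ (these exist for every half-automorphism). Then $g=F^-_{(g',g'',u,v)}$.
   Context: Let $K=\{1,a,b,c\}$ be the Klein four-group. Set $L_M=K\times M$ with the operation $(A,x)*(B,y)=(AB,xy)$ if $B=1$, and $(A,x)*(B,y)=(AB,x^{-1}y)$ if $B\neq 1$. For $u,v\in M$ with $u^2=v^2=1$, $\alpha_{(u,v)}:K\to M$ is defined by $\alpha_{(u,v)}(1)=1$, $\alpha_{(u,v)}(a)=u$, $\alpha_{(u,v)}(b)=v$, $\alpha_{(u,v)}(c)=uv$. For $f'\in\mathrm{Aut}(K)$, $f''\in\mathrm{Aut}(M)$ define $F^-_{(f',f'',u,v)}(1,x)=(1,f''(x))$ and $F^-_{(f',f'',u,v)}(A,x)=(f'(A),f''(x^{-1})\alpha_{(u,v)}(A))$ for $A\neq 1$. A half-automorphism of a loop $L$ is a bijection $f:L\to L$ with $f(XY)\in\{f(X)f(Y),f(Y)f(X)\}$ for all $X,Y$; it is proper if it is neither an automorphism nor an anti-automorphism. *)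

theory Defs
  imports Main
begin

datatype K = K1 | Ka | Kb | Kc

fun kmult :: "K \<Rightarrow> K \<Rightarrow> K" where
  "kmult K1 y = y"
| "kmult x K1 = x"
| "kmult Ka Ka = K1" | "kmult Ka Kb = Kc" | "kmult Ka Kc = Kb"
| "kmult Kb Ka = Kc" | "kmult Kb Kb = K1" | "kmult Kb Kc = Ka"
| "kmult Kc Ka = Kb" | "kmult Kc Kb = Ka" | "kmult Kc Kc = K1"

definition autK :: "(K \<Rightarrow> K) \<Rightarrow> bool" where
  "autK f \<longleftrightarrow> bij f \<and> (\<forall>x y. f (kmult x y) = kmult (f x) (f y))"

text \<open>The abelian group M is written additively (identity 0, inverse uminus).\<close>
definition autM :: "('m::ab_group_add \<Rightarrow> 'm) \<Rightarrow> bool" where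
  "autM f \<longleftrightarrow> bij f \<and> (\<forall>x y. f (x + y) = f x + f y)"

definition grp_exponent :: "'m::ab_group_add itself \<Rightarrow> nat" where
  "grp_exponent _ = (LEAST n. 0 < n \<and> (\<forall>x::'m. (((+) x) ^^ n) 0 = 0))"

definition LM_mult :: "K \<times> 'm::ab_group_add \<Rightarrow> K \<times> 'm \<Rightarrow> K \<times> 'm" where
  "LM_mult X Y = (case X of (A, x) \<Rightarrow> case Y of (B, y) \<Rightarrow>
     if B = K1 then (kmult A B, x + y) else (kmult A B, - x + y))"

definition half_aut :: "(K \<times> 'm::ab_group_add \<Rightarrow> K \<times> 'm) \<Rightarrow> bool" where
  "half_aut f \<longleftrightarrow> bij f \<and>
     (\<forall>X Y. f (LM_mult X Y) \<in> {LM_mult (f X) (f Y), LM_mult (f Y) (f X)})"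

definition loop_aut :: "(K \<times> 'm::ab_group_add \<Rightarrow> K \<times> 'm) \<Rightarrow> bool" where
  "loop_aut f \<longleftrightarrow> bij f \<and> (\<forall>X Y. f (LM_mult X Y) = LM_mult (f X) (f Y))"

definition loop_antiaut :: "(K \<times> 'm::ab_group_add \<Rightarrow> K \<times> 'm) \<Rightarrow> bool" where
  "loop_antiaut f \<longleftrightarrow> bij f \<and> (\<forall>X Y. f (LM_mult X Y) = LM_mult (f Y) (f X))"

definition proper_half_aut :: "(K \<times> 'm::ab_group_add \<Rightarrow> K \<times> 'm) \<Rightarrow> bool" where
  "proper_half_aut f \<longleftrightarrow> half_aut f \<and> \<not> loop_aut f \<and> \<not> loop_antiaut f"

definition alpha :: "'m::ab_group_add \<Rightarrow> 'm \<Rightarrow> K \<Rightarrow> 'm" where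
  "alpha u v A = (case A of K1 \<Rightarrow> 0 | Ka \<Rightarrow> u | Kb \<Rightarrow> v | Kc \<Rightarrow> u + v)"

definition Fminus :: "(K \<Rightarrow> K) \<Rightarrow> ('m::ab_group_add \<Rightarrow> 'm) \<Rightarrow> 'm \<Rightarrow> 'm \<Rightarrow> K \<times> 'm \<Rightarrow> K \<times> 'm" where
  "Fminus f' f'' u v X = (case X of (A, x) \<Rightarrow>
     if A = K1 then (K1, f'' x) else (f' A, f'' (- x) + alpha u v A))"

end

theory Submission
  imports Defs
begin

lemma alpha_hom:
  fixes u v :: "'m::ab_group_add"
  assumes "u + u = 0" "v + v = 0"
  shows "alpha u v (kmult A B) = alpha u v A + alpha u v B"
proof -
  have uu: "- u = u" using assms(1) by (metis add_eq_0_iff)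
  have vv: "- v = v" using assms(2) by (metis add_eq_0_iff)
  have c: "u + v + (u + v) = 0"
    by (metis add.assoc add.commute add.left_neutral assms)
  show ?thesis
    by (cases A; cases B; simp add: alpha_def assms c algebra_simps; metis add.commute add.assoc assms add.left_neutral add.right_neutral)
qed

lemma alpha_neg:
  fixes u v :: "'m::ab_group_add"
  assumes "u + u = 0" "v + v = 0"
  shows "- alpha u v A = alpha u v A"
proof -
  have "alpha u v A + alpha u v A = 0"
    using alpha_hom[OF assms, of A A] by (cases A) (simp_all add: alpha_def)
  then show ?thesis by (metis add_eq_0_iff)
qed

lemma kmult_K1r[simp]: "kmult A K1 = A" by (cases A) auto
lemma kmult_self[simp]: "kmult A A = K1" by (cases A) auto

lemma exists_nontriv:
  assumes "grp_exponent TYPE('m::ab_group_add) > 2"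
  shows "\<exists>x::'m. x + x \<noteq> 0"
proof (rule ccontr)
  assume "\<not> ?thesis"
  then have h: "\<forall>x::'m. x + x = 0" by auto
  have "(0::nat) < 2 \<and> (\<forall>x::'m. (((+) x) ^^ 2) 0 = 0)"
    using h by (simp add: numeral_2_eq_2)
  then have "grp_exponent TYPE('m) \<le> 2"
    unfolding grp_exponent_def by (rule Least_le)
  with assms show False by simp
qed

theorem proposition4p12:
  fixes g :: "K \<times> ('m::{ab_group_add, finite}) \<Rightarrow> K \<times> 'm"
    and g' :: "K \<Rightarrow> K" and g'' :: "'m \<Rightarrow> 'm" and u v :: 'm
  assumes "grp_exponent TYPE('m) > 2"
    and "proper_half_aut g"
    and "autK g'"
    and "u + u = 0" and "v + v = 0"
    and "\<forall>A. g (A, 0) = (g' A, alpha u v A)"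
    and "autM g''"
    and "\<forall>x. g (K1, x) = (K1, g'' x)"
  shows "g = Fminus g' g'' u v"
proof -
  note uv = assms(4,5)
  define h where "h = g''"
  define al where "al = alpha u v"
  have g0: "g (A, 0) = (g' A, al A)" for A using assms(6) al_def by simp
  have g1: "g (K1, x) = (K1, h x)" for x using assms(8) h_def by simp
  have hadd: "h (x + y) = h x + h y" for x y using assms(7) h_def autM_def by auto
  have hbij: "bij h" using assms(7) h_def autM_def by auto
  have h0: "h 0 = 0" using hadd[of 0 0] by simp
  have hneg: "h (- x) = - h x" for x using hadd[of x "- x"] h0
    by (simp add: eq_neg_iff_add_eq_0 add.commute)
  have hdiff: "h (z - x) = h z - h x" for z x
    using hadd[of z "- x"] hneg by simp
  have alhom: "al (kmult A B) = al A + al B" for A B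
    using alpha_hom[OF uv] al_def by simp
  have alneg: "- al A = al A" for A using alpha_neg[OF uv] al_def by simp
  have al1: "al K1 = 0" by (simp add: al_def alpha_def)
  have g'hom: "g' (kmult A B) = kmult (g' A) (g' B)" for A B
    using assms(3) autK_def by auto
  have g'inj: "inj g'" using assms(3) autK_def bij_def by auto
  have g'1: "g' K1 = K1" using g'hom[of K1 K1] by simp
  have g'ne: "A \<noteq> K1 \<Longrightarrow> g' A \<noteq> K1" for A using g'1 g'inj by (metis injD)
  have ha: "half_aut g" using assms(2) proper_half_aut_def by auto
  have half: "g (LM_mult X Y) = LM_mult (g X) (g Y) \<or> g (LM_mult X Y) = LM_mult (g Y) (g X)" for X Y
    using ha unfolding half_aut_def by blast
  define P where "P A x \<longleftrightarrow> g (A, x) = (g' A, h x + al A)" for A x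
  define N where "N A x \<longleftrightarrow> g (A, x) = (g' A, - h x + al A)" for A x
  have step2: "P A x \<or> N A x" if "A \<noteq> K1" for A x
  proof -
    have e: "LM_mult (A, 0) (K1, x) = (A, x)" by (simp add: LM_mult_def)
    show ?thesis using half[of "(A,0)" "(K1,x)"] unfolding e g0 g1 P_def N_def
      using g'ne[OF that] by (auto simp: LM_mult_def add.commute)
  qed
  have step3: "P A z" if "A \<noteq> K1" "P A x" "h x + h x \<noteq> 0" for A x z
  proof -
    have e: "LM_mult (A, x) (K1, z - x) = (A, z)" by (simp add: LM_mult_def)
    have gx: "g (A, x) = (g' A, h x + al A)" using that(2) P_def by simp
    have "g (A, z) = (g' A, h x + al A + (h z - h x)) \<or> g (A, z) = (g' A, - (h z - h x) + (h x + al A))"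
      using half[of "(A,x)" "(K1,z-x)"] unfolding e gx g1 hdiff
      using g'ne[OF that(1)] by (auto simp: LM_mult_def)
    then show ?thesis
    proof
      assume "g (A, z) = (g' A, h x + al A + (h z - h x))"
      then show ?thesis by (simp add: P_def algebra_simps)
    next
      assume a: "g (A, z) = (g' A, - (h z - h x) + (h x + al A))"
      show ?thesis
      proof (rule ccontr)
        assume "\<not> P A z"
        then have "N A z" using step2[OF that(1)] by auto
        with a have "- h z + al A = - (h z - h x) + (h x + al A)" by (simp add: N_def)
        then have "h x + h x = 0" by (simp add: algebra_simps)
        with that(3) show False by simp
      qed
    qed
  qed
  have PN2: "P A x \<longleftrightarrow> N A x" if "h x + h x = 0" for A x
  proof -
    have "- h x = h x" using that by (metis add_eq_0_iff)
    then show ?thesis by (simp add: P_def N_def)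
  qed
  have uni: "(\<forall>x. N A x) \<or> (\<forall>x. P A x)" if "A \<noteq> K1" for A
  proof (cases "\<forall>x. N A x")
    case False
    then obtain x where "\<not> N A x" by auto
    then have px: "P A x" and hx: "h x + h x \<noteq> 0" using step2[OF that] PN2 by auto
    have "P A z" for z
    proof (cases "h z + h z = 0")
      case True then show ?thesis using step2[OF that] PN2 by auto
    next
      case False then show ?thesis using step3[OF that px hx] by simp
    qed
    then show ?thesis by auto
  qed simp
  obtain m :: 'm where m: "m + m \<noteq> 0" using exists_nontriv[OF assms(1)] by auto
  obtain e where he: "h e = m" using hbij by (metis bij_pointE)
  have step4: False if "A \<noteq> K1" "B \<noteq> K1" "A \<noteq> B" "\<forall>x. P A x" "\<forall>x. N B x" for A B
  proof -
    have AB: "kmult A B \<noteq> K1" using that(3) by (cases A; cases B) auto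
    have e: "LM_mult (A, e) (B, e) = (kmult A B, 0)" using that(2) by (simp add: LM_mult_def)
    have ga: "g (A, e) = (g' A, m + al A)" using that(4) he P_def by simp
    have gb: "g (B, e) = (g' B, - m + al B)" using that(5) he N_def by simp
    have "(g' (kmult A B), al (kmult A B)) = (kmult (g' A) (g' B), - (m + al A) + (- m + al B))
        \<or> (g' (kmult A B), al (kmult A B)) = (kmult (g' B) (g' A), - (- m + al B) + (m + al A))"
      using half[of "(A,e)" "(B,e)"] unfolding e ga gb g0
      using g'ne[OF that(1)] g'ne[OF that(2)] by (auto simp: LM_mult_def)
    then have "al A + al B = - (m + al A) + (- m + al B) \<or> al A + al B = - (- m + al B) + (m + al A)"
      by (auto simp: alhom)
    moreover have "- (m + al A) = - m + al A" using alneg[of A] by (metis add.commute minus_add)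
    moreover have "- (- m + al B) = m + al B" using alneg[of B] by (metis add.commute minus_add minus_minus)
    ultimately have "al A + al B = - m + al A + (- m + al B) \<or> al A + al B = m + al B + (m + al A)"
      by metis
    moreover have "- m + al A + (- m + al B) = (- (m + m)) + (al A + al B)" by (simp add: algebra_simps)
    moreover have "m + al B + (m + al A) = (m + m) + (al A + al B)" by (simp add: algebra_simps)
    ultimately have "al A + al B = (- (m + m)) + (al A + al B) \<or> al A + al B = (m + m) + (al A + al B)"
      by metis
    then have "m + m = 0" by (metis add_cancel_left_left neg_equal_0_iff_equal)
    with m show False by simp
  qed
  have allsame: "(\<forall>A x. A \<noteq> K1 \<longrightarrow> N A x) \<or> (\<forall>A x. A \<noteq> K1 \<longrightarrow> P A x)"
  proof -
    have a: "(\<forall>x. N Ka x) \<or> (\<forall>x. P Ka x)" "(\<forall>x. N Kb x) \<or> (\<forall>x. P Kb x)"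
        "(\<forall>x. N Kc x) \<or> (\<forall>x. P Kc x)" using uni by auto
    have b: "\<forall>x. N A x" if "\<forall>x. N B x" "A \<noteq> K1" "B \<noteq> K1" "A \<noteq> B" for A B
      using uni[OF that(2)] step4[OF that(2,3,4)] that(1) by blast
    have c: "\<forall>x. P A x" if "\<forall>x. P B x" "A \<noteq> K1" "B \<noteq> K1" "A \<noteq> B" for A B
      using uni[OF that(2)] step4[OF that(3,2)] that by metis
    have "(\<forall>x. N Ka x) \<and> (\<forall>x. N Kb x) \<and> (\<forall>x. N Kc x) \<or> (\<forall>x. P Ka x) \<and> (\<forall>x. P Kb x) \<and> (\<forall>x. P Kc x)"
      using a b c by (metis K.distinct)
    then show ?thesis by (metis K.exhaust)
  qed
  then show ?thesis
  proof
    assume "\<forall>A x. A \<noteq> K1 \<longrightarrow> N A x"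
    then show ?thesis
      by (intro ext) (auto simp: Fminus_def N_def g1 h_def al_def hneg[unfolded h_def] split: prod.splits)
  next
    assume allP: "\<forall>A x. A \<noteq> K1 \<longrightarrow> P A x"
    have gf: "g (A, x) = (g' A, h x + al A)" for A x
      using allP P_def g1 g'1 al1 by (cases "A = K1") auto
    have "loop_aut g"
      unfolding loop_aut_def
    proof (intro conjI allI)
      show "bij g" using ha half_aut_def by auto
    next
      fix X Y :: "K \<times> 'm"
      obtain A x B y where X: "X = (A, x)" and Y: "Y = (B, y)" by (cases X, cases Y)
      show "g (LM_mult X Y) = LM_mult (g X) (g Y)"
      proof (cases "B = K1")
        case True
        then show ?thesis unfolding X Y using g'1
          by (simp add: LM_mult_def gf hadd al1 algebra_simps)
      next
        case False
        have aa: "al A + (al A + z) = z" for z using alneg[of A]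
          by (metis add.assoc add.left_neutral left_minus)
        then show ?thesis unfolding X Y using False g'ne[OF False]
          by (simp add: LM_mult_def gf hadd hneg hdiff g'hom alhom aa algebra_simps)
      qed
    qed
    then show ?thesis using assms(2) proper_half_aut_def by auto
  qed
qed

end
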